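(* Let $G=(V,E)$ be a finite chordal graph. Then for every integer $r\ge 1$, \[ \sum_{\substack{I\in\mathscr{C}(G)\\ |I|\le 2r}} (-1)^{|I|-1} \;\le\; c(G), \] with equality whenever $r\ge |V|/2$.
   Context: A graph is chordal if it contains no cycle of length four or more as an induced subgraph. $\mathscr{C}(G)$ denotes the clique complex of $G$: the set of all non-empty subsets $I\subseteq V$ whose elements are pairwise adjacent in $G$. $c(G)$ denotes the number of connected components of $G$. *)

theory Defs
  imports Main
begin

definition simple_graph :: "'a set \<Rightarrow> ('a \<Rightarrow> 'a \<Rightarrow> bool) \<Rightarrow> bool" where
  "simple_graph V E \<longleftrightarrow> finite V \<and> (\<forall>x y. E x y \<longrightarrow> x \<in> V \<and> y \<in> V)
     \<and> (\<forall>x y. E x y \<longrightarrow> E y x) \<and> (\<forall>x. \<not> E x x)"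

definition induced_cycle :: "'a set \<Rightarrow> ('a \<Rightarrow> 'a \<Rightarrow> bool) \<Rightarrow> 'a list \<Rightarrow> bool" where
  "induced_cycle V E vs \<longleftrightarrow> distinct vs \<and> set vs \<subseteq> V \<and>
     (\<forall>i < length vs. \<forall>j < length vs.
        E (vs ! i) (vs ! j) \<longleftrightarrow> (j = Suc i mod length vs \<or> i = Suc j mod length vs))"

definition chordal :: "'a set \<Rightarrow> ('a \<Rightarrow> 'a \<Rightarrow> bool) \<Rightarrow> bool" where
  "chordal V E \<longleftrightarrow> \<not> (\<exists>vs. length vs \<ge> 4 \<and> induced_cycle V E vs)"

definition clique_complex :: "'a set \<Rightarrow> ('a \<Rightarrow> 'a \<Rightarrow> bool) \<Rightarrow> 'a set set" where
  "clique_complex V E = {I. I \<noteq> {} \<and> I \<subseteq> V \<and> (\<forall>x\<in>I. \<forall>y\<in>I. x \<noteq> y \<longrightarrow> E x y)}"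

definition num_components :: "'a set \<Rightarrow> ('a \<Rightarrow> 'a \<Rightarrow> bool) \<Rightarrow> nat" where
  "num_components V E =
     card (V // {(x, y). x \<in> V \<and> y \<in> V \<and> (\<lambda>a b. E a b \<and> a \<in> V \<and> b \<in> V)\<^sup>*\<^sup>* x y})"

end

theory Submission
  imports Defs
begin

lemma cycle_from_path:
  assumes sym: "\<And>x y. E x y \<Longrightarrow> E y x" and irr: "\<And>x. \<not> E x x"
    and vxs: "v \<notin> set xs" and dxs: "distinct xs" and vV: "v \<in> V" and xsV: "set xs \<subseteq> V"
    and len: "length xs \<ge> 3"
    and ev: "\<And>k. k < length xs \<Longrightarrow> E v (xs!k) \<longleftrightarrow> (k = 0 \<or> k = length xs - 1)"
    and exx: "\<And>k l. k < length xs \<Longrightarrow> l < length xs \<Longrightarrow> E (xs!k) (xs!l) \<longleftrightarrow> (l = Suc k \<or> k = Suc l)"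
  shows "induced_cycle V E (v # xs)"
  unfolding induced_cycle_def
proof (intro conjI allI impI)
  show "distinct (v # xs)" using vxs dxs by simp
  show "set (v # xs) \<subseteq> V" using vV xsV by simp
  fix i j assume i: "i < length (v # xs)" and j: "j < length (v # xs)"
  define n where "n = length (v # xs)"
  have n4: "n \<ge> 4" using len n_def by simp
  show "E ((v # xs) ! i) ((v # xs) ! j) = (j = Suc i mod length (v # xs) \<or> i = Suc j mod length (v # xs))"
  proof (cases i)
    case 0
    show ?thesis
    proof (cases j)
      case 0 then show ?thesis using \<open>i = 0\<close> irr n4 n_def len by (cases xs) auto
    next
      case (Suc l)
      have "l < length xs" using j Suc by simp
      then have "E v (xs!l) \<longleftrightarrow> (l = 0 \<or> l = length xs - 1)" by (rule ev)
      moreover have "(j = Suc i mod n \<or> i = Suc j mod n) \<longleftrightarrow> (l = 0 \<or> l = length xs - 1)"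
        using \<open>i = 0\<close> Suc n4 n_def j by (auto simp: mod_Suc)
      ultimately show ?thesis using \<open>i = 0\<close> Suc n_def by simp
    qed
  next
    case (Suc k)
    have k: "k < length xs" using i Suc by simp
    show ?thesis
    proof (cases j)
      case 0
      have "E v (xs!k) \<longleftrightarrow> (k = 0 \<or> k = length xs - 1)" using k by (rule ev)
      moreover have "(j = Suc i mod n \<or> i = Suc j mod n) \<longleftrightarrow> (k = 0 \<or> k = length xs - 1)"
        using \<open>j = 0\<close> Suc n4 n_def i by (auto simp: mod_Suc)
      ultimately show ?thesis using \<open>j = 0\<close> Suc n_def sym by auto
    next
      case (Suc l)
      have l: "l < length xs" using j Suc by simp
      have "E (xs!k) (xs!l) \<longleftrightarrow> (l = Suc k \<or> k = Suc l)" using k l by (rule exx)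
      moreover have "(j = Suc i mod n \<or> i = Suc j mod n) \<longleftrightarrow> (l = Suc k \<or> k = Suc l)"
        using \<open>i = Suc k\<close> Suc n4 n_def i j by (auto simp: mod_Suc)
      ultimately show ?thesis using \<open>i = Suc k\<close> Suc n_def by simp
    qed
  qed
qed

definition reach :: "'a set \<Rightarrow> ('a \<Rightarrow> 'a \<Rightarrow> bool) \<Rightarrow> 'a \<Rightarrow> 'a \<Rightarrow> bool" where
  "reach W E = (\<lambda>a b. E a b \<and> a \<in> W \<and> b \<in> W)\<^sup>*\<^sup>*"

lemma reach_refl: "reach W E x x" unfolding reach_def by simp

lemma reach_trans: "reach W E x y \<Longrightarrow> reach W E y z \<Longrightarrow> reach W E x z"
  unfolding reach_def by (rule rtranclp_trans)

lemma reach_edge: "E x y \<Longrightarrow> x \<in> W \<Longrightarrow> y \<in> W \<Longrightarrow> reach W E x y"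
  unfolding reach_def by (rule r_into_rtranclp) simp

lemma reach_path:
  assumes "reach W E x y" "x \<in> W"
  shows "\<exists>xs. xs \<noteq> [] \<and> hd xs = x \<and> last xs = y \<and> set xs \<subseteq> W \<and> successively E xs"
  using assms(1) unfolding reach_def
proof (induction rule: rtranclp_induct)
  case base
  then show ?case using assms(2) by (intro exI[of _ "[x]"]) simp
next
  case (step y z)
  then obtain xs where xs: "xs \<noteq> []" "hd xs = x" "last xs = y" "set xs \<subseteq> W" "successively E xs" by blast
  show ?case using xs step(2)
    by (intro exI[of _ "xs @ [z]"]) (auto simp: successively_append_iff)
qed

lemma succ_take: "successively E xs \<Longrightarrow> successively E (take n xs)"
  using successively_append_iff[of E "take n xs" "drop n xs"] by simp
lemma succ_drop: "successively E xs \<Longrightarrow> successively E (drop n xs)"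
  using successively_append_iff[of E "take n xs" "drop n xs"] by simp

lemma last_take_nth: "k < length xs \<Longrightarrow> last (take (Suc k) xs) = xs!k"
  by (subst last_conv_nth) auto
lemma hd_take_nth: "xs \<noteq> [] \<Longrightarrow> hd (take (Suc k) xs) = xs!0"
  by (simp add: hd_conv_nth)
lemma last_drop_nth: "k < length xs \<Longrightarrow> last (drop k xs) = xs!(length xs - 1)"
  by (simp add: last_conv_nth)

lemma nbr_conn:
  assumes sym: "\<And>x y. E x y \<Longrightarrow> E y x" and irr: "\<And>x. \<not> E x x"
    and ch: "chordal V E" and vV: "v \<in> V"
    and aN: "a \<in> {u \<in> V. E v u}" and bN: "b \<in> {u \<in> V. E v u}"
    and r: "reach (V - {v}) E a b"
  shows "reach {u \<in> V. E v u} E a b"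
proof (rule ccontr)
  define N where "N = {u \<in> V. E v u}"
  define V' where "V' = V - {v}"
  assume nr: "\<not> reach {u \<in> V. E v u} E a b"
  define P where "P xs \<longleftrightarrow> xs \<noteq> [] \<and> set xs \<subseteq> V' \<and> successively E xs \<and> hd xs \<in> N \<and> last xs \<in> N
      \<and> \<not> reach N E (hd xs) (last xs)" for xs
  have NV': "N \<subseteq> V'" using irr unfolding N_def V'_def by auto
  obtain ys where "ys \<noteq> []" "hd ys = a" "last ys = b" "set ys \<subseteq> V'" "successively E ys"
    using reach_path[OF r] aN irr unfolding V'_def by auto
  then have "P ys" using aN bN nr unfolding P_def N_def by auto
  then obtain xs where Pxs: "P xs" and mini: "\<And>ys. P ys \<Longrightarrow> length xs \<le> length ys"
    using ex_has_least_nat[of P ys length] by blast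
  define L where "L = length xs"
  have ne: "xs \<noteq> []" and xsV': "set xs \<subseteq> V'" and sx: "successively E xs"
    and hN: "xs!0 \<in> N" and lN: "xs!(L-1) \<in> N" and nrx: "\<not> reach N E (xs!0) (xs!(L-1))"
    using Pxs unfolding P_def L_def by (auto simp: hd_conv_nth last_conv_nth)
  have L0: "L > 0" using ne L_def by simp
  have hdx: "hd xs = xs!0" and lastx: "last xs = xs!(L-1)" using ne L_def by (auto simp: hd_conv_nth last_conv_nth)
  have xin: "k < L \<Longrightarrow> xs!k \<in> V'" for k using xsV' L_def by auto
  have shorter: "False" if "P ys" "length ys < L" for ys using mini[OF that(1)] that(2) L_def by simp
  have L2: "L \<ge> 2"
  proof (rule ccontr)
    assume "\<not> L \<ge> 2" then have "L = 1" using L0 by simp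
    then show False using nrx reach_refl[of N E "xs!0"] by simp
  qed
  have L3: "L \<ge> 3"
  proof (rule ccontr)
    assume "\<not> L \<ge> 3" then have "L = 2" using L2 by simp
    then have "E (xs!0) (xs!1)" using successively_nth[OF sx, of 0] L_def by simp
    then have "reach N E (xs!0) (xs!(L-1))" using \<open>L = 2\<close> hN lN by (simp add: reach_edge)
    then show False using nrx by simp
  qed
  have notN: "xs!k \<notin> N" if k: "0 < k" "k < L - 1" for k
  proof
    assume kN: "xs!k \<in> N"
    have "\<not> reach N E (xs!0) (xs!k) \<or> \<not> reach N E (xs!k) (xs!(L-1))"
      using nrx reach_trans[of N E "xs!0" "xs!k" "xs!(L-1)"] by blast
    then show False
    proof
      assume h: "\<not> reach N E (xs!0) (xs!k)"
      let ?ys = "take (Suc k) xs"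
      have "hd ?ys = xs!0" "last ?ys = xs!k" using k L_def ne by (auto simp: hd_take_nth last_take_nth hd_conv_nth)
      moreover have "set ?ys \<subseteq> V'" using xsV' by (auto dest: in_set_takeD)
      moreover have "?ys \<noteq> []" using k L_def ne by simp
      ultimately have "P ?ys" unfolding P_def using succ_take[OF sx] hN kN h by simp
      moreover have "length ?ys < L" using k L_def by simp
      ultimately show False using shorter by blast
    next
      assume h: "\<not> reach N E (xs!k) (xs!(L-1))"
      let ?ys = "drop k xs"
      have "hd ?ys = xs!k" "last ?ys = xs!(L-1)" using k L_def by (auto simp: hd_drop_conv_nth last_drop_nth lastx)
      moreover have "set ?ys \<subseteq> V'" using xsV' by (auto dest: in_set_dropD)
      moreover have "?ys \<noteq> []" using k L_def ne by simp
      ultimately have "P ?ys" unfolding P_def using succ_drop[OF sx] lN kN h by simp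
      moreover have "length ?ys < L" using k L_def by simp
      ultimately show False using shorter by blast
    qed
  qed
  have nochord: "\<not> E (xs!k) (xs!l)" if kl: "Suc k < l" "l < L" for k l
  proof
    assume e: "E (xs!k) (xs!l)"
    let ?ys = "take (Suc k) xs @ drop l xs"
    have "last (take (Suc k) xs) = xs!k" using kl L_def by (simp add: last_take_nth)
    moreover have "hd (drop l xs) = xs!l" using kl L_def by (simp add: hd_drop_conv_nth)
    ultimately have "successively E ?ys" using succ_take[OF sx] succ_drop[OF sx] e kl L_def
      by (simp add: successively_append_iff)
    moreover have "hd ?ys = xs!0" "last ?ys = xs!(L-1)" using kl L_def ne by (simp_all add: hdx lastx)
    moreover have "set ?ys \<subseteq> V'" using xsV' by (auto dest: in_set_takeD in_set_dropD)
    ultimately have "P ?ys" unfolding P_def using hN lN nrx ne by auto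
    moreover have "length ?ys < L" using kl L_def by simp
      ultimately show False using shorter by blast
  qed
  have nodup: "xs!k \<noteq> xs!l" if kl: "k < l" "l < L" for k l
  proof
    assume eq: "xs!k = xs!l"
    show False
    proof (cases "l = Suc k")
      case True
      then show False using successively_nth[OF sx, of k] kl L_def eq irr by simp
    next
      case False
      let ?ys = "take (Suc k) xs @ drop (Suc l) xs"
      have lt: "last (take (Suc k) xs) = xs!k" using kl L_def by (simp add: last_take_nth)
      have "successively E ?ys"
      proof (cases "Suc l < L")
        case True
        have "hd (drop (Suc l) xs) = xs!Suc l" using True L_def by (simp add: hd_drop_conv_nth)
        moreover have "E (xs!l) (xs!Suc l)" using successively_nth[OF sx, of l] True L_def by simp
        ultimately show ?thesis using succ_take[OF sx] succ_drop[OF sx] lt eq True L_def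
          by (simp add: successively_append_iff)
      next
        case False then show ?thesis using succ_take[OF sx] kl L_def by simp
      qed
      moreover have "hd ?ys = xs!0" using kl L_def ne by (simp add: hdx)
      moreover have "last ?ys = xs!(L-1)"
      proof (cases "Suc l < L")
        case True then show ?thesis using L_def ne by (simp add: lastx)
      next
        case False then have "l = L - 1" using kl by simp
        then show ?thesis using lt eq kl L_def by simp
      qed
      moreover have "set ?ys \<subseteq> V'" using xsV' by (auto dest: in_set_takeD in_set_dropD)
      ultimately have "P ?ys" unfolding P_def using hN lN nrx ne by auto
      moreover have "length ?ys < L" using kl L_def \<open>l \<noteq> Suc k\<close> by simp
      ultimately show False using shorter by blast
    qed
  qed
  have "induced_cycle V E (v # xs)"
  proof (rule cycle_from_path[OF sym irr])
    show "v \<notin> set xs" using xsV' V'_def by auto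
    show "distinct xs" unfolding distinct_conv_nth L_def[symmetric]
      using nodup by (metis linorder_neqE_nat)
    show "v \<in> V" by (rule vV)
    show "set xs \<subseteq> V" using xsV' V'_def by auto
    show "3 \<le> length xs" using L3 L_def by simp
    show "E v (xs!k) \<longleftrightarrow> (k = 0 \<or> k = length xs - 1)" if "k < length xs" for k
    proof -
      have "E v (xs!k) \<longleftrightarrow> xs!k \<in> N" using xin[of k] that L_def unfolding N_def V'_def by auto
      moreover have "k \<noteq> 0 \<Longrightarrow> k \<noteq> L - 1 \<Longrightarrow> xs!k \<notin> N" using that L_def by (intro notN) auto
      ultimately show ?thesis using hN lN that L_def by auto
    qed
    show "E (xs!k) (xs!l) \<longleftrightarrow> (l = Suc k \<or> k = Suc l)" if "k < length xs" "l < length xs" for k l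
    proof
      assume e: "E (xs!k) (xs!l)"
      show "l = Suc k \<or> k = Suc l"
      proof (rule ccontr)
        assume c: "\<not> (l = Suc k \<or> k = Suc l)"
        consider "k = l" | "Suc k < l" | "Suc l < k" using c by linarith
        then show False
        proof cases
          case 1 then show False using e irr by simp
        next
          case 2 then show False using e nochord[of k l] that L_def by simp
        next
          case 3 then show False using sym[OF e] nochord[of l k] that L_def by simp
        qed
      qed
    next
      assume "l = Suc k \<or> k = Suc l"
      then show "E (xs!k) (xs!l)"
      proof
        assume "l = Suc k" then show ?thesis using successively_nth[OF sx, of k] that by simp
      next
        assume "k = Suc l" then show ?thesis using successively_nth[OF sx, of l] sym that by simp
      qed
    qed
  qed
  then show False using ch L3 L_def unfolding chordal_def by force
qed

lemma reach_sym:
  assumes sym: "\<And>x y. E x y \<Longrightarrow> E y x" and r: "reach W E x y"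
  shows "reach W E y x"
  using r unfolding reach_def
proof (induction rule: rtranclp_induct)
  case base then show ?case by simp
next
  case (step y z)
  then show ?case using sym by (auto intro: converse_rtranclp_into_rtranclp)
qed

lemma reach_mono: "reach W E x y \<Longrightarrow> W \<subseteq> U \<Longrightarrow> reach U E x y"
  unfolding reach_def by (erule rtranclp_mono[THEN predicate2D, rotated]) auto

definition cls :: "'a set \<Rightarrow> ('a \<Rightarrow> 'a \<Rightarrow> bool) \<Rightarrow> 'a \<Rightarrow> 'a set" where
  "cls W E x = {y \<in> W. reach W E x y}"

lemma num_components_cls: "num_components W E = card (cls W E ` W)"
proof -
  have "W // {(x, y). x \<in> W \<and> y \<in> W \<and> (\<lambda>a b. E a b \<and> a \<in> W \<and> b \<in> W)\<^sup>*\<^sup>* x y} = cls W E ` W"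
    unfolding quotient_def cls_def reach_def by auto
  then show ?thesis unfolding num_components_def by simp
qed

lemma cls_eq:
  assumes sym: "\<And>x y. E x y \<Longrightarrow> E y x" and "x \<in> W" "y \<in> W"
  shows "cls W E x = cls W E y \<longleftrightarrow> reach W E x y"
proof
  assume "cls W E x = cls W E y"
  then have "y \<in> cls W E x" using assms(3) reach_refl[of W E y] unfolding cls_def by auto
  then show "reach W E x y" unfolding cls_def by simp
next
  assume r: "reach W E x y"
  have r': "reach W E y x" by (rule reach_sym[OF sym r])
  show "cls W E x = cls W E y" unfolding cls_def
    using reach_trans[OF r] reach_trans[OF r'] by blast
qed

lemma card_image_eq_rel:
  assumes "\<And>a b. a \<in> A \<Longrightarrow> b \<in> A \<Longrightarrow> f a = f b \<longleftrightarrow> g a = g b"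
  shows "card (f ` A) = card (g ` A)"
proof -
  define h where "h y = f (inv_into A g y)" for y
  have hg: "h (g a) = f a" if "a \<in> A" for a
  proof -
    have "inv_into A g (g a) \<in> A" "g (inv_into A g (g a)) = g a"
      using that by (auto intro: inv_into_into f_inv_into_f)
    then show ?thesis unfolding h_def using assms that by blast
  qed
  have "h ` (g ` A) = f ` A" using hg by (auto simp: image_image)
  moreover have "inj_on h (g ` A)"
    unfolding inj_on_def using hg assms by auto
  ultimately show ?thesis using card_image by metis
qed

lemma comp_split:
  assumes fin: "finite V" and vV: "v \<in> V" and sym: "\<And>x y. E x y \<Longrightarrow> E y x" and irr: "\<And>x. \<not> E x x"
    and ch: "chordal V E"
  shows "int (num_components V E) = int (num_components (V - {v}) E) + 1 - int (num_components {u \<in> V. E v u} E)"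
proof -
  define V' where "V' = V - {v}"
  define N where "N = {u \<in> V. E v u}"
  have NV': "N \<subseteq> V'" using irr unfolding N_def V'_def by auto
  define tch where "tch x \<longleftrightarrow> (\<exists>a\<in>N. reach V' E x a)" for x
  define Xt where "Xt = {x \<in> V'. tch x}"
  define Xn where "Xn = V' - Xt"
  have V'V: "V' \<subseteq> V" unfolding V'_def by auto
  have key: "y \<noteq> v \<and> reach V' E x y" if r: "reach V E x y" and x: "x \<in> V'" "\<not> tch x" for x y
    using r unfolding reach_def[of V]
  proof (induction rule: rtranclp_induct)
    case base then show ?case using x reach_refl unfolding V'_def by auto
  next
    case (step y z)
    then have yv: "y \<noteq> v" and ry: "reach V' E x y" and eyz: "E y z" "y \<in> V" "z \<in> V" by auto
    show ?case
    proof (cases "z = v")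
      case True
      then have "y \<in> N" using eyz sym unfolding N_def by auto
      then show ?thesis using ry x(2) unfolding tch_def by auto
    next
      case False
      then have "reach V' E y z" using eyz yv unfolding V'_def by (intro reach_edge) auto
      then show ?thesis using False reach_trans[OF ry] by auto
    qed
  qed
  have i: "cls V E x = cls V' E x" if "x \<in> Xn" for x
  proof -
    have x: "x \<in> V'" "\<not> tch x" using that unfolding Xn_def Xt_def by auto
    show ?thesis unfolding cls_def
    proof (intro set_eqI iffI)
      fix y assume "y \<in> {y \<in> V. reach V E x y}"
      then show "y \<in> {y \<in> V'. reach V' E x y}" using key[of x y] x unfolding V'_def by auto
    next
      fix y assume "y \<in> {y \<in> V'. reach V' E x y}"
      then show "y \<in> {y \<in> V. reach V E x y}" using reach_mono[OF _ V'V] V'V by auto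
    qed
  qed
  have ii: "cls V E x = cls V E v" if xt: "x \<in> Xt" for x
  proof -
    obtain a where a: "a \<in> N" "reach V' E x a" using xt unfolding Xt_def tch_def by auto
    have "reach V E x a" using reach_mono[OF a(2) V'V] .
    moreover have "reach V E a v" using a(1) sym vV unfolding N_def by (intro reach_edge) auto
    ultimately have "reach V E x v" by (rule reach_trans)
    moreover have "x \<in> V" using xt V'V unfolding Xt_def by auto
    ultimately show ?thesis using cls_eq[where E=E, OF sym, of x V v] vV by blast
  qed
  have V'split: "V' = Xn \<union> Xt" unfolding Xn_def Xt_def by auto
  have "cls V E ` V = cls V' E ` Xn \<union> {cls V E v}"
  proof -
    have "V = Xn \<union> Xt \<union> {v}" using V'split vV unfolding V'_def by auto
    then have "cls V E ` V = cls V E ` Xn \<union> cls V E ` Xt \<union> {cls V E v}" by auto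
    moreover have "cls V E ` Xn = cls V' E ` Xn" using i by auto
    moreover have "cls V E ` Xt \<subseteq> {cls V E v}" using ii by auto
    ultimately show ?thesis by auto
  qed
  moreover have "cls V E v \<notin> cls V' E ` Xn"
  proof
    assume "cls V E v \<in> cls V' E ` Xn"
    moreover have "v \<in> cls V E v" using vV reach_refl unfolding cls_def by auto
    ultimately show False unfolding cls_def V'_def by auto
  qed
  moreover have finXn: "finite Xn" using fin unfolding Xn_def V'_def by auto
  ultimately have cV: "num_components V E = card (cls V' E ` Xn) + 1"
    unfolding num_components_cls by simp
  have "cls V' E ` V' = cls V' E ` Xn \<union> cls V' E ` Xt" using V'split by auto
  moreover have "cls V' E ` Xn \<inter> cls V' E ` Xt = {}"
  proof (rule ccontr)
    assume "cls V' E ` Xn \<inter> cls V' E ` Xt \<noteq> {}"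
    then obtain x y where xy: "x \<in> Xn" "y \<in> Xt" "cls V' E x = cls V' E y" by auto
    then have "reach V' E x y" using cls_eq[where E=E, OF sym] unfolding Xn_def Xt_def by auto
    moreover obtain a where "a \<in> N" "reach V' E y a" using xy unfolding Xt_def tch_def by auto
    ultimately have "tch x" unfolding tch_def using reach_trans[of V' E x y a] by blast
    then show False using xy unfolding Xn_def Xt_def by auto
  qed
  moreover have "finite Xt" using fin unfolding Xt_def V'_def by auto
  ultimately have cV': "num_components V' E = card (cls V' E ` Xn) + card (cls V' E ` Xt)"
    unfolding num_components_cls using finXn by (simp add: card_Un_disjoint)
  have "cls V' E ` Xt = cls V' E ` N"
  proof
    show "cls V' E ` Xt \<subseteq> cls V' E ` N"
    proof
      fix c assume "c \<in> cls V' E ` Xt"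
      then obtain x where x: "x \<in> Xt" "c = cls V' E x" by auto
      then obtain a where a: "a \<in> N" "reach V' E x a" unfolding Xt_def tch_def by auto
      have "cls V' E x = cls V' E a" using cls_eq[where E=E, OF sym] a x NV' unfolding Xt_def by auto
      then show "c \<in> cls V' E ` N" using x a by auto
    qed
  next
    have "N \<subseteq> Xt" using NV' reach_refl[of V' E] unfolding Xt_def tch_def by blast
    then show "cls V' E ` N \<subseteq> cls V' E ` Xt" by auto
  qed
  moreover have "card (cls V' E ` N) = card (cls N E ` N)"
  proof (rule card_image_eq_rel)
    fix a b assume ab: "a \<in> N" "b \<in> N"
    have "cls V' E a = cls V' E b \<longleftrightarrow> reach V' E a b" using cls_eq[where E=E, OF sym] ab NV' by auto
    also have "\<dots> \<longleftrightarrow> reach N E a b"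
      using nbr_conn[where E=E, OF sym irr ch vV, of a b] ab reach_mono[of N E a b V'] NV'
      unfolding N_def V'_def by auto
    also have "\<dots> \<longleftrightarrow> cls N E a = cls N E b" using cls_eq[where E=E, OF sym] ab by auto
    finally show "cls V' E a = cls V' E b \<longleftrightarrow> cls N E a = cls N E b" .
  qed
  ultimately have "num_components V' E = card (cls V' E ` Xn) + num_components N E"
    using cV' num_components_cls[of N E] by simp
  then show ?thesis using cV unfolding V'_def N_def by simp
qed

definition fsum :: "nat \<Rightarrow> 'a set \<Rightarrow> ('a \<Rightarrow> 'a \<Rightarrow> bool) \<Rightarrow> int" where
  "fsum m W E = (\<Sum>I\<in>{I \<in> clique_complex W E. card I \<le> m}. (-1::int) ^ (card I - 1))"

lemma fsum_split:
  assumes fin: "finite V" and vV: "v \<in> V" and sym: "\<And>x y. E x y \<Longrightarrow> E y x" and irr: "\<And>x. \<not> E x x"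
  shows "fsum m V E = fsum m (V - {v}) E + (if m \<ge> 1 then 1 else 0) - fsum (m - 1) {u \<in> V. E v u} E"
proof -
  define N where "N = {u \<in> V. E v u}"
  define f where "f I = (-1::int) ^ (card I - 1)" for I :: "'a set"
  define A where "A = {I \<in> clique_complex V E. card I \<le> m}"
  define A1 where "A1 = {I \<in> A. v \<notin> I}"
  define A2 where "A2 = {I \<in> A. v \<in> I}"
  define B where "B = {S. S \<subseteq> N \<and> (\<forall>x\<in>S. \<forall>y\<in>S. x \<noteq> y \<longrightarrow> E x y) \<and> card S + 1 \<le> m}"
  define C where "C = {S \<in> clique_complex N E. card S \<le> m - 1}"
  have vN: "v \<notin> N" using irr unfolding N_def by auto
  have finN: "finite N" using fin unfolding N_def by auto
  have finA: "finite A" unfolding A_def clique_complex_def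
    by (rule finite_subset[of _ "Pow V"]) (use fin in auto)
  have AU: "A = A1 \<union> A2" and Ad: "A1 \<inter> A2 = {}" unfolding A1_def A2_def by auto
  have sA: "sum f A = sum f A1 + sum f A2"
    using finA AU Ad by (simp add: sum.union_disjoint)
  have A1eq: "A1 = {I \<in> clique_complex (V - {v}) E. card I \<le> m}"
    unfolding A1_def A_def clique_complex_def by auto
  have A2eq: "A2 = insert v ` B"
  proof
    show "A2 \<subseteq> insert v ` B"
    proof
      fix I assume I: "I \<in> A2"
      then have I': "I \<noteq> {}" "I \<subseteq> V" "\<forall>x\<in>I. \<forall>y\<in>I. x \<noteq> y \<longrightarrow> E x y" "card I \<le> m" "v \<in> I"
        unfolding A2_def A_def clique_complex_def by auto
      have finI: "finite I" using I'(2) fin finite_subset by blast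
      have "I - {v} \<subseteq> N" using I' unfolding N_def by auto
      moreover have "card (I - {v}) + 1 \<le> m" using I' finI
        by (metis card_Diff_singleton card_gt_0_iff Suc_pred' Suc_eq_plus1 empty_iff)
      moreover have "\<forall>x\<in>I - {v}. \<forall>y\<in>I - {v}. x \<noteq> y \<longrightarrow> E x y" using I' by auto
      ultimately have "I - {v} \<in> B" unfolding B_def by auto
      moreover have "I = insert v (I - {v})" using I' by auto
      ultimately show "I \<in> insert v ` B" by blast
    qed
  next
    show "insert v ` B \<subseteq> A2"
    proof
      fix I assume "I \<in> insert v ` B"
      then obtain S where S: "S \<in> B" "I = insert v S" by auto
      have SN: "S \<subseteq> N" using S unfolding B_def by auto
      have finS: "finite S" using SN finN finite_subset by blast
      have vS: "v \<notin> S" using SN vN by auto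
      have "card I = card S + 1" using S finS vS by simp
      moreover have "\<forall>x\<in>I. \<forall>y\<in>I. x \<noteq> y \<longrightarrow> E x y"
        using S SN sym unfolding B_def N_def by blast
      moreover have "I \<subseteq> V" using S SN vV unfolding N_def by auto
      ultimately show "I \<in> A2" using S unfolding A2_def A_def clique_complex_def B_def by auto
    qed
  qed
  have injB: "inj_on (insert v) B"
  proof (rule inj_onI)
    fix S T assume "S \<in> B" "T \<in> B" "insert v S = insert v T"
    moreover have "v \<notin> S" "v \<notin> T" using \<open>S \<in> B\<close> \<open>T \<in> B\<close> vN unfolding B_def by auto
    ultimately show "S = T" by (metis Diff_insert_absorb)
  qed
  have sA2: "sum f A2 = (\<Sum>S\<in>B. (-1::int) ^ card S)"
  proof -
    have "sum f A2 = sum (f \<circ> insert v) B" using A2eq injB by (simp add: sum.reindex)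
    also have "\<dots> = (\<Sum>S\<in>B. (-1::int) ^ card S)"
    proof (rule sum.cong)
      fix S assume "S \<in> B"
      then have "S \<subseteq> N" unfolding B_def by auto
      then have "finite S" "v \<notin> S" using finN vN finite_subset by auto
      then show "(f \<circ> insert v) S = (-1::int) ^ card S" unfolding f_def by simp
    qed simp
    finally show ?thesis .
  qed
  have BU: "B = (if m \<ge> 1 then {{}} else {}) \<union> C"
  proof (intro set_eqI iffI)
    fix S assume S: "S \<in> B"
    show "S \<in> (if m \<ge> 1 then {{}} else {}) \<union> C"
    proof (cases "S = {}")
      case True then show ?thesis using S unfolding B_def by auto
    next
      case False
      have "finite S" using S finN finite_subset unfolding B_def by blast
      then have "card S \<ge> 1" using False by (simp add: Suc_leI card_gt_0_iff)
      then show ?thesis using S False unfolding B_def C_def clique_complex_def by auto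
    qed
  next
    fix S assume S: "S \<in> (if m \<ge> 1 then {{}} else {}) \<union> C"
    show "S \<in> B"
    proof (cases "S \<in> C")
      case True
      then have "S \<noteq> {}" "S \<subseteq> N" unfolding C_def clique_complex_def by auto
      moreover have "finite S" using \<open>S \<subseteq> N\<close> finN finite_subset by blast
      ultimately have "card S \<ge> 1" by (simp add: Suc_leI card_gt_0_iff)
      then show ?thesis using True unfolding B_def C_def clique_complex_def by auto
    next
      case False then show ?thesis using S unfolding B_def by (auto split: if_splits)
    qed
  qed
  have finC: "finite C" unfolding C_def clique_complex_def
    by (rule finite_subset[of _ "Pow N"]) (use finN in auto)
  have "(\<Sum>S\<in>B. (-1::int) ^ card S) = (if m \<ge> 1 then 1 else 0) + (\<Sum>S\<in>C. (-1::int) ^ card S)"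
  proof -
    have "{} \<notin> C" unfolding C_def clique_complex_def by auto
    then show ?thesis unfolding BU using finC by (auto simp: sum.insert)
  qed
  moreover have "(\<Sum>S\<in>C. (-1::int) ^ card S) = - fsum (m - 1) N E"
  proof -
    have "(\<Sum>S\<in>C. (-1::int) ^ card S) = (\<Sum>S\<in>C. - ((-1::int) ^ (card S - 1)))"
    proof (rule sum.cong)
      fix S assume "S \<in> C"
      then have "S \<noteq> {}" "S \<subseteq> N" unfolding C_def clique_complex_def by auto
      moreover have "finite S" using \<open>S \<subseteq> N\<close> finN finite_subset by blast
      ultimately have "card S = Suc (card S - 1)" by (simp add: card_gt_0_iff)
      then show "(-1::int) ^ card S = - ((-1::int) ^ (card S - 1))" by (metis power_Suc mult_minus1)
    qed simp
    then show ?thesis unfolding fsum_def C_def by (simp add: sum_negf)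
  qed
  ultimately show ?thesis
    using sA sA2 A1eq unfolding fsum_def A_def f_def N_def by simp
qed

lemma chordal_subset: "chordal V E \<Longrightarrow> W \<subseteq> V \<Longrightarrow> chordal W E"
  unfolding chordal_def induced_cycle_def by blast

lemma fsum_0: "finite W \<Longrightarrow> fsum 0 W E = 0"
  unfolding fsum_def clique_complex_def
  by (rule sum.neutral) (auto dest: finite_subset)

lemma fsum_empty: "fsum m {} E = 0"
  unfolding fsum_def clique_complex_def by simp

lemma nc_empty: "num_components {} E = 0"
  unfolding num_components_def by simp

lemma main:
  assumes "finite V" and sym: "\<And>x y. E x y \<Longrightarrow> E y x" and irr: "\<And>x. \<not> E x x" and "chordal V E"
  shows "(even m \<longrightarrow> fsum m V E \<le> int (num_components V E))
       \<and> (odd m \<longrightarrow> fsum m V E \<ge> int (num_components V E))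
       \<and> (card V \<le> m \<longrightarrow> fsum m V E = int (num_components V E))"
  using assms(1,4)
proof (induction "card V" arbitrary: V m rule: less_induct)
  case less
  show ?case
  proof (cases "V = {}")
    case True then show ?thesis by (simp add: fsum_empty nc_empty)
  next
    case False
    then obtain v where vV: "v \<in> V" by auto
    define V' where "V' = V - {v}"
    define N where "N = {u \<in> V. E v u}"
    have NV': "N \<subseteq> V'" using irr unfolding N_def V'_def by auto
    have cV0: "card V > 0" using vV less.prems(1) card_gt_0_iff by blast
    have cV': "card V' < card V" "card V' = card V - 1" using vV less.prems(1) cV0 unfolding V'_def
      by auto
    have finV': "finite V'" using less.prems(1) unfolding V'_def by auto
    have cN: "card N \<le> card V'" using card_mono[OF finV' NV'] .
    have IH1: "(even m \<longrightarrow> fsum m V' E \<le> int (num_components V' E))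
       \<and> (odd m \<longrightarrow> fsum m V' E \<ge> int (num_components V' E))
       \<and> (card V' \<le> m \<longrightarrow> fsum m V' E = int (num_components V' E))"
      using less.hyps[OF cV'(1)] finV' chordal_subset[OF less.prems(2)] unfolding V'_def by auto
    have IH2: "(even (m-1) \<longrightarrow> fsum (m-1) N E \<le> int (num_components N E))
       \<and> (odd (m-1) \<longrightarrow> fsum (m-1) N E \<ge> int (num_components N E))
       \<and> (card N \<le> m-1 \<longrightarrow> fsum (m-1) N E = int (num_components N E))"
      using less.hyps[of N] cN cV' finite_subset[OF NV' finV'] chordal_subset[OF less.prems(2)]
      unfolding N_def by auto
    have fs: "fsum m V E = fsum m V' E + (if m \<ge> 1 then 1 else 0) - fsum (m - 1) N E"
      using fsum_split[OF less.prems(1) vV sym irr] unfolding V'_def N_def .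
    have cs: "int (num_components V E) = int (num_components V' E) + 1 - int (num_components N E)"
      using comp_split[OF less.prems(1) vV sym irr less.prems(2)] unfolding V'_def N_def .
    have A: "even m \<longrightarrow> fsum m V E \<le> int (num_components V E)"
    proof
      assume ev: "even m"
      show "fsum m V E \<le> int (num_components V E)"
      proof (cases "m = 0")
        case True then show ?thesis using fsum_0[OF less.prems(1)] by simp
      next
        case False
        then have "odd (m - 1)" "m \<ge> 1" using ev by auto
        then show ?thesis using fs cs IH1 IH2 ev by auto
      qed
    qed
    have B: "odd m \<longrightarrow> fsum m V E \<ge> int (num_components V E)"
    proof
      assume od: "odd m"
      then have "even (m - 1)" "m \<ge> 1" by (auto elim: oddE)
      then show "fsum m V E \<ge> int (num_components V E)" using fs cs IH1 IH2 od by auto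
    qed
    have C: "card V \<le> m \<longrightarrow> fsum m V E = int (num_components V E)"
    proof
      assume "card V \<le> m"
      moreover have "card V > 0" using False less.prems(1) by (simp add: card_gt_0_iff)
      ultimately have "m \<ge> 1" "card V' \<le> m" "card N \<le> m - 1" using cV' cN by auto
      then show "fsum m V E = int (num_components V E)" using fs cs IH1 IH2 by auto
    qed
    show ?thesis using A B C by blast
  qed
qed

theorem proposition2:
  fixes V :: "'a set" and E :: "'a \<Rightarrow> 'a \<Rightarrow> bool" and r :: nat
  assumes "simple_graph V E" and "chordal V E" and "r \<ge> 1"
  shows "(\<Sum>I\<in>{I \<in> clique_complex V E. card I \<le> 2 * r}. (-1::int) ^ (card I - 1))
           \<le> int (num_components V E)
         \<and> (card V \<le> 2 * r \<longrightarrow>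
         (\<Sum>I\<in>{I \<in> clique_complex V E. card I \<le> 2 * r}. (-1::int) ^ (card I - 1))
           = int (num_components V E))"
proof -
  have fin: "finite V" and sym: "\<And>x y. E x y \<Longrightarrow> E y x" and irr: "\<And>x. \<not> E x x"
    using assms(1) unfolding simple_graph_def by auto
  from main[OF fin sym irr assms(2), of "2 * r"] show ?thesis unfolding fsum_def by auto
qed

end
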